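(* Let $P$ be a polyhedron and $F$ a finite rooted poset. Then $\chi(F)$ is not valid on $P$ if and only if there exist an open subpolyhedron $Q$ of $P$ and a surjective open polyhedral map $f\colon Q\to F$. Moreover, if $P$ is convex, then $Q$ may be chosen to be convex as well.
   Context: A polyhedron is a finite union of convex hulls of finite subsets of some $\mathbb R^d$. An open subpolyhedron of $P$ is $P\setminus R$ with $R\subseteq P$ a polyhedron; $\mathrm{Sub}_o P$ is the Heyting algebra of open subpolyhedra of $P$, and a formula is valid on $P$ iff it is valid on $\mathrm{Sub}_o P$. For an open subpolyhedron $Q$ of $P$, set $\mathrm{Sub}_o Q=\{O\cap Q: O\in\mathrm{Sub}_o P\}$. A function $f\colon Q\to F$ to a poset $F$ is a polyhedral map if $f^{-1}[U]\in\mathrm{Sub}_o Q$ for every upset $U$ of $F$, and it is open if $f[O]$ is an upset of $F$ for every $O\in\mathrm{Sub}_o Q$. For a finite rooted poset $F$, $\chi(F)$ is its Jankov–Fine formula: a frame $G$ validates $\chi(F)$ iff there is no surjective p-morphism (map with $g(\uparrow x)=\uparrow g(x)$) from an upset of $G$ onto $F$. *)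

theory Defs
  imports "HOL-Analysis.Analysis"
begin

definition polyhedron :: "'a::euclidean_space set \<Rightarrow> bool" where
  "polyhedron P \<longleftrightarrow>
     (\<exists>SS. finite SS \<and> (\<forall>S\<in>SS. finite S) \<and> P = \<Union> ((\<lambda>S. convex hull S) ` SS))"

definition SubO :: "'a::euclidean_space set \<Rightarrow> 'a set set" where
  "SubO P = {P - R | R. polyhedron R \<and> R \<subseteq> P}"

definition SubO_rel :: "'a::euclidean_space set \<Rightarrow> 'a set \<Rightarrow> 'a set set" where
  "SubO_rel P Q = {W \<inter> Q | W. W \<in> SubO P}"

datatype 'v fm = Var 'v | Bot | Conj "'v fm" "'v fm" | Disj "'v fm" "'v fm" | Imp "'v fm" "'v fm"

definition Top :: "'v fm" where "Top = Imp Bot Bot"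
definition Iff :: "'v fm \<Rightarrow> 'v fm \<Rightarrow> 'v fm" where "Iff a b = Conj (Imp a b) (Imp b a)"
definition Conjs :: "'v fm list \<Rightarrow> 'v fm" where "Conjs xs = foldr Conj xs Top"

text \<open>Evaluation in the Heyting algebra Sub_o P (implication = largest open
  subpolyhedron c with c \<inter> a \<subseteq> b, i.e. the union of all such).\<close>
fun eval :: "'a::euclidean_space set \<Rightarrow> ('v \<Rightarrow> 'a set) \<Rightarrow> 'v fm \<Rightarrow> 'a set" where
  "eval P v (Var x) = v x"
| "eval P v Bot = {}"
| "eval P v (Conj a b) = eval P v a \<inter> eval P v b"
| "eval P v (Disj a b) = eval P v a \<union> eval P v b"
| "eval P v (Imp a b) = \<Union> {c \<in> SubO P. c \<inter> eval P v a \<subseteq> eval P v b}"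

definition valid_on :: "'a::euclidean_space set \<Rightarrow> 'v fm \<Rightarrow> bool" where
  "valid_on P \<phi> \<longleftrightarrow> (\<forall>v. (\<forall>x. v x \<in> SubO P) \<longrightarrow> eval P v \<phi> = P)"

definition partial_order_on_set :: "'b set \<Rightarrow> ('b \<Rightarrow> 'b \<Rightarrow> bool) \<Rightarrow> bool" where
  "partial_order_on_set F le \<longleftrightarrow>
     (\<forall>x\<in>F. le x x) \<and>
     (\<forall>x\<in>F. \<forall>y\<in>F. le x y \<and> le y x \<longrightarrow> x = y) \<and>
     (\<forall>x\<in>F. \<forall>y\<in>F. \<forall>z\<in>F. le x y \<and> le y z \<longrightarrow> le x z)"

definition is_root :: "'b set \<Rightarrow> ('b \<Rightarrow> 'b \<Rightarrow> bool) \<Rightarrow> 'b \<Rightarrow> bool" where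
  "is_root F le r \<longleftrightarrow> r \<in> F \<and> (\<forall>x\<in>F. le r x)"

definition finite_rooted_poset :: "'b set \<Rightarrow> ('b \<Rightarrow> 'b \<Rightarrow> bool) \<Rightarrow> bool" where
  "finite_rooted_poset F le \<longleftrightarrow> finite F \<and> partial_order_on_set F le \<and> (\<exists>r. is_root F le r)"

definition is_upset :: "'b set \<Rightarrow> ('b \<Rightarrow> 'b \<Rightarrow> bool) \<Rightarrow> 'b set \<Rightarrow> bool" where
  "is_upset F le U \<longleftrightarrow> U \<subseteq> F \<and> (\<forall>x\<in>U. \<forall>y\<in>F. le x y \<longrightarrow> y \<in> U)"

definition Upsets :: "'b set \<Rightarrow> ('b \<Rightarrow> 'b \<Rightarrow> bool) \<Rightarrow> 'b set set" where
  "Upsets F le = {U. is_upset F le U}"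

definition up_imp :: "'b set \<Rightarrow> ('b \<Rightarrow> 'b \<Rightarrow> bool) \<Rightarrow> 'b set \<Rightarrow> 'b set \<Rightarrow> 'b set" where
  "up_imp F le a b = {x\<in>F. \<forall>y\<in>F. le x y \<and> y \<in> a \<longrightarrow> y \<in> b}"

text \<open>The Jankov--Fine formula chi(F) of a finite rooted poset F, given as the
  Jankov formula of the finite subdirectly irreducible Heyting algebra Up(F):
  one variable p_a for each upset a, the conjunction of the diagram
  p_{a\<and>b} \<leftrightarrow> p_a \<and> p_b, p_{a\<or>b} \<leftrightarrow> p_a \<or> p_b,
  p_{a\<rightarrow>b} \<leftrightarrow> (p_a \<rightarrow> p_b), p_0 \<leftrightarrow> \<bottom>, implying p_s where
  s = F minus the root is the second-greatest element of Up(F).\<close>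
definition jankov_clause :: "'b set \<Rightarrow> ('b \<Rightarrow> 'b \<Rightarrow> bool) \<Rightarrow> 'b set \<Rightarrow> 'b set \<Rightarrow> 'b set fm" where
  "jankov_clause F le a b =
     Conj (Iff (Var (a \<inter> b)) (Conj (Var a) (Var b)))
      (Conj (Iff (Var (a \<union> b)) (Disj (Var a) (Var b)))
            (Iff (Var (up_imp F le a b)) (Imp (Var a) (Var b))))"

definition jankov_fine :: "'b set \<Rightarrow> ('b \<Rightarrow> 'b \<Rightarrow> bool) \<Rightarrow> 'b set fm" where
  "jankov_fine F le =
     (let pairs = (SOME xs. distinct xs \<and> set xs = Upsets F le \<times> Upsets F le);
          r = (THE r. is_root F le r)
      in Imp (Conj (Iff (Var {}) Bot) (Conjs (map (\<lambda>(a, b). jankov_clause F le a b) pairs)))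
             (Var (F - {r})))"

definition polyhedral_map ::
  "'a::euclidean_space set \<Rightarrow> 'a set \<Rightarrow> 'b set \<Rightarrow> ('b \<Rightarrow> 'b \<Rightarrow> bool) \<Rightarrow> ('a \<Rightarrow> 'b) \<Rightarrow> bool" where
  "polyhedral_map P Q F le f \<longleftrightarrow>
     f ` Q \<subseteq> F \<and> (\<forall>U. is_upset F le U \<longrightarrow> {x\<in>Q. f x \<in> U} \<in> SubO_rel P Q)"

definition open_map ::
  "'a::euclidean_space set \<Rightarrow> 'a set \<Rightarrow> 'b set \<Rightarrow> ('b \<Rightarrow> 'b \<Rightarrow> bool) \<Rightarrow> ('a \<Rightarrow> 'b) \<Rightarrow> bool" where
  "open_map P Q F le f \<longleftrightarrow> (\<forall>W\<in>SubO_rel P Q. is_upset F le (f ` W))"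

end

theory Submission
  imports Defs
begin

lemma poly_empty: "polyhedron ({}::'a::euclidean_space set)"
  unfolding polyhedron_def by (rule exI[of _ "{}"]) auto

lemma poly_Un: assumes "polyhedron A" "polyhedron B" shows "polyhedron (A \<union> B)"
proof -
  from assms obtain SA SB where "finite SA" "\<forall>S\<in>SA. finite S" "A = \<Union>((\<lambda>S. convex hull S) ` SA)"
    "finite SB" "\<forall>S\<in>SB. finite S" "B = \<Union>((\<lambda>S. convex hull S) ` SB)"
    unfolding polyhedron_def by metis
  then show ?thesis unfolding polyhedron_def by (intro exI[of _ "SA \<union> SB"]) auto
qed

lemma poly_UN: "finite I \<Longrightarrow> (\<forall>i\<in>I. polyhedron (A i)) \<Longrightarrow> polyhedron (\<Union>i\<in>I. A i)"
  by (induction I rule: finite_induct) (auto intro: poly_empty poly_Un)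

lemma poly_half:
  fixes i :: "'a::euclidean_space"
  assumes "finite S"
  shows "polyhedron (convex hull S \<inter> {x. x \<bullet> i \<le> t})" "polyhedron (convex hull S \<inter> {x. t \<le> x \<bullet> i})"
proof -
  have "polytope (convex hull S \<inter> {x. i \<bullet> x \<le> t})"
    by (rule polytope_Int_polyhedron[OF polytope_convex_hull[OF assms] polyhedron_halfspace_le])
  then obtain T where "finite T" "convex hull S \<inter> {x. i \<bullet> x \<le> t} = convex hull T" unfolding polytope_def by blast
  then show "polyhedron (convex hull S \<inter> {x. x \<bullet> i \<le> t})" unfolding polyhedron_def
    by (intro exI[of _ "{T}"]) (auto simp: inner_commute)
next
  have "polytope (convex hull S \<inter> {x. i \<bullet> x \<ge> t})"
    by (rule polytope_Int_polyhedron[OF polytope_convex_hull[OF assms] polyhedron_halfspace_ge])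
  then obtain T where "finite T" "convex hull S \<inter> {x. i \<bullet> x \<ge> t} = convex hull T" unfolding polytope_def by blast
  then show "polyhedron (convex hull S \<inter> {x. t \<le> x \<bullet> i})" unfolding polyhedron_def
    by (intro exI[of _ "{T}"]) (auto simp: inner_commute)
qed

lemma poly_closed: "polyhedron R \<Longrightarrow> closed R"
  unfolding polyhedron_def
  by (auto intro!: closed_Union compact_imp_closed compact_convex_hull[OF finite_imp_compact])

lemma SubO_sub: "W \<in> SubO P \<Longrightarrow> W \<subseteq> P" unfolding SubO_def by auto
lemma SubO_top: "P \<in> SubO P" unfolding SubO_def using poly_empty by force
lemma SubO_Int: "A \<in> SubO P \<Longrightarrow> B \<in> SubO P \<Longrightarrow> A \<inter> B \<in> SubO P"
proof -
  assume "A \<in> SubO P" "B \<in> SubO P"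
  then obtain R1 R2 where "A = P - R1" "polyhedron R1" "R1 \<subseteq> P" "B = P - R2" "polyhedron R2" "R2 \<subseteq> P"
    unfolding SubO_def by auto
  then show ?thesis unfolding SubO_def
    by (intro CollectI exI[of _ "R1 \<union> R2"]) (auto intro: poly_Un)
qed

lemma nbhd:
  assumes "polyhedron P" "c \<in> SubO P" "y \<in> c"
  shows "\<exists>Q\<in>SubO P. y \<in> Q \<and> Q \<subseteq> c \<and> (convex P \<longrightarrow> convex Q)"
proof -
  obtain R where R: "c = P - R" "polyhedron R" "R \<subseteq> P" using assms(2) unfolding SubO_def by auto
  have "open (- R)" using poly_closed[OF R(2)] by auto
  moreover have "y \<in> - R" using assms(3) R(1) by auto
  ultimately obtain a b where ab: "box a b \<subseteq> - R" "y \<in> box a b"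
    using open_contains_box by metis
  obtain SS where SS: "finite SS" "\<forall>S\<in>SS. finite S" "P = \<Union>((\<lambda>S. convex hull S) ` SS)"
    using assms(1) unfolding polyhedron_def by blast
  have eq: "P - box a b = (\<Union>S\<in>SS. \<Union>i\<in>Basis. (convex hull S \<inter> {x. x \<bullet> i \<le> a \<bullet> i}) \<union> (convex hull S \<inter> {x. b \<bullet> i \<le> x \<bullet> i}))" (is "_ = ?RHS")
  proof
    show "P - box a b \<subseteq> ?RHS"
    proof
      fix x assume x: "x \<in> P - box a b"
      then obtain S where S: "S \<in> SS" "x \<in> convex hull S" using SS(3) by auto
      from x obtain i where i: "i \<in> Basis" "\<not> (a \<bullet> i < x \<bullet> i \<and> x \<bullet> i < b \<bullet> i)" by (auto simp: mem_box)
      then have "x \<bullet> i \<le> a \<bullet> i \<or> b \<bullet> i \<le> x \<bullet> i" by linarith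
      then show "x \<in> ?RHS" using S i by blast
    qed
    show "?RHS \<subseteq> P - box a b"
    proof
      fix x assume "x \<in> ?RHS"
      then obtain S i where S: "S \<in> SS" "i \<in> Basis" "x \<in> convex hull S" and c: "x \<bullet> i \<le> a \<bullet> i \<or> b \<bullet> i \<le> x \<bullet> i" by blast
      have "x \<notin> box a b"
      proof
        assume "x \<in> box a b"
        then have "a \<bullet> i < x \<bullet> i" "x \<bullet> i < b \<bullet> i" using S(2) by (auto simp: mem_box)
        then show False using c by linarith
      qed
      moreover have "x \<in> P" using SS(3) S by blast
      ultimately show "x \<in> P - box a b" by blast
    qed
  qed
  have "polyhedron (P - box a b)" unfolding eq
    using SS by (intro poly_UN ballI poly_Un poly_half) auto
  then have "P \<inter> box a b \<in> SubO P" unfolding SubO_def by (intro CollectI exI[of _ "P - box a b"]) auto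
  then show ?thesis using ab R assms(3) by (intro bexI[of _ "P \<inter> box a b"]) (auto intro: convex_Int convex_box)
qed

lemma eval_Imp_sub: "eval P v (Imp A B) \<subseteq> P"
  unfolding eval.simps using SubO_sub by blast
lemma eval_Imp_mp: "y \<in> eval P v (Imp A B) \<Longrightarrow> y \<in> eval P v A \<Longrightarrow> y \<in> eval P v B"
  unfolding eval.simps by blast
lemma eval_Imp_I: "c \<in> SubO P \<Longrightarrow> y \<in> c \<Longrightarrow> c \<inter> eval P v A \<subseteq> eval P v B \<Longrightarrow> y \<in> eval P v (Imp A B)"
  unfolding eval.simps by blast
lemma eval_Imp_top: assumes "eval P v A \<subseteq> eval P v B" shows "eval P v (Imp A B) = P"
proof
  show "eval P v (Imp A B) \<subseteq> P" by (rule eval_Imp_sub)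
  show "P \<subseteq> eval P v (Imp A B)"
  proof
    fix y assume "y \<in> P"
    then show "y \<in> eval P v (Imp A B)" using eval_Imp_I[OF SubO_top] assms by blast
  qed
qed
lemma eval_Iff_top: "eval P v A = eval P v B \<Longrightarrow> eval P v (Iff A B) = P"
  unfolding Iff_def eval.simps(3) using eval_Imp_top[of P v A B] eval_Imp_top[of P v B A] by simp
lemma eval_Iff_sub: "eval P v (Iff A B) \<subseteq> P"
  unfolding Iff_def eval.simps(3) using eval_Imp_sub[of P v A B] by blast
lemma eval_Iff_mem: "y \<in> eval P v (Iff A B) \<Longrightarrow> y \<in> eval P v A \<longleftrightarrow> y \<in> eval P v B"
  unfolding Iff_def eval.simps(3) using eval_Imp_mp[of y P v A B] eval_Imp_mp[of y P v B A] by blast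
lemma eval_Top: "eval P v Top = P"
  unfolding Top_def by (rule eval_Imp_top) simp
lemma Conjs_Cons: "Conjs (x # xs) = Conj x (Conjs xs)" by (simp add: Conjs_def)
lemma Conjs_Nil: "Conjs [] = Top" by (simp add: Conjs_def)
lemma eval_Conjs: "eval P v (Conjs xs) = P \<inter> \<Inter>(eval P v ` set xs)"
proof (induction xs)
  case Nil then show ?case by (simp only: Conjs_Nil eval_Top) simp
next
  case (Cons x xs)
  have "eval P v (Conjs (x # xs)) = eval P v x \<inter> eval P v (Conjs xs)" by (simp only: Conjs_Cons eval.simps)
  also have "... = eval P v x \<inter> (P \<inter> \<Inter>(eval P v ` set xs))" using Cons by simp
  finally show ?case by auto
qed

lemma eval_locopen:
  assumes vS: "\<forall>x. v x \<in> SubO P" and yin: "y \<in> eval P v \<phi>"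
  shows "\<exists>c\<in>SubO P. y \<in> c \<and> c \<subseteq> eval P v \<phi>"
  using yin
proof (induction \<phi> arbitrary: y)
  case (Var x)
  have "v x \<in> SubO P" using vS by blast
  then show ?case using Var.prems by (intro bexI[of _ "v x"]) simp_all
next
  case Bot then show ?case by simp
next
  case (Conj a b)
  have ya: "y \<in> eval P v a" and yb: "y \<in> eval P v b" using Conj.prems by simp_all
  obtain c1 where c1: "c1 \<in> SubO P" "y \<in> c1" "c1 \<subseteq> eval P v a" using Conj.IH(1)[OF ya] by blast
  obtain c2 where c2: "c2 \<in> SubO P" "y \<in> c2" "c2 \<subseteq> eval P v b" using Conj.IH(2)[OF yb] by blast
  have "c1 \<inter> c2 \<in> SubO P" using c1(1) c2(1) by (rule SubO_Int)
  moreover have "y \<in> c1 \<inter> c2" using c1 c2 by simp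
  moreover have "c1 \<inter> c2 \<subseteq> eval P v (Conj a b)" using c1(3) c2(3) by auto
  ultimately show ?case by blast
next
  case (Disj a b)
  show ?case
  proof (cases "y \<in> eval P v a")
    case True
    obtain c where c: "c \<in> SubO P" "y \<in> c" "c \<subseteq> eval P v a" using Disj.IH(1)[OF True] by blast
    then have "c \<subseteq> eval P v (Disj a b)" by auto
    then show ?thesis using c(1,2) by blast
  next
    case False
    then have yb: "y \<in> eval P v b" using Disj.prems by simp
    obtain c where c: "c \<in> SubO P" "y \<in> c" "c \<subseteq> eval P v b" using Disj.IH(2)[OF yb] by blast
    then have "c \<subseteq> eval P v (Disj a b)" by auto
    then show ?thesis using c(1,2) by blast
  qed
next
  case (Imp a b)
  from Imp.prems obtain c where c: "c \<in> SubO P" "y \<in> c" "c \<inter> eval P v a \<subseteq> eval P v b"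
    unfolding eval.simps by blast
  have "c \<subseteq> eval P v (Imp a b)" using c(1,3) unfolding eval.simps by blast
  then show ?case using c(1,2) by blast
qed

lemma po_refl: "partial_order_on_set F le \<Longrightarrow> x \<in> F \<Longrightarrow> le x x"
  unfolding partial_order_on_set_def by blast
lemma po_antisym: "partial_order_on_set F le \<Longrightarrow> x \<in> F \<Longrightarrow> y \<in> F \<Longrightarrow> le x y \<Longrightarrow> le y x \<Longrightarrow> x = y"
  unfolding partial_order_on_set_def by blast
lemma po_trans: "partial_order_on_set F le \<Longrightarrow> x \<in> F \<Longrightarrow> y \<in> F \<Longrightarrow> z \<in> F \<Longrightarrow> le x y \<Longrightarrow> le y z \<Longrightarrow> le x z"
  unfolding partial_order_on_set_def by blast

definition upc :: "'b set \<Rightarrow> ('b \<Rightarrow> 'b \<Rightarrow> bool) \<Rightarrow> 'b \<Rightarrow> 'b set" where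
  "upc F le z = {u\<in>F. le z u}"

lemma upset_Int: "is_upset F le a \<Longrightarrow> is_upset F le b \<Longrightarrow> is_upset F le (a \<inter> b)"
  unfolding is_upset_def by auto
lemma upset_Un: "is_upset F le a \<Longrightarrow> is_upset F le b \<Longrightarrow> is_upset F le (a \<union> b)"
  unfolding is_upset_def by auto
lemma upset_empty: "is_upset F le {}" unfolding is_upset_def by auto
lemma upset_F: "is_upset F le F" unfolding is_upset_def by auto
lemma upset_imp: assumes po: "partial_order_on_set F le" shows "is_upset F le (up_imp F le a b)"
  unfolding is_upset_def
proof (intro conjI ballI impI)
  show "up_imp F le a b \<subseteq> F" unfolding up_imp_def by auto
  fix x y assume x: "x \<in> up_imp F le a b" and y: "y \<in> F" "le x y"
  have xF: "x \<in> F" using x unfolding up_imp_def by auto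
  have "w \<in> b" if "w \<in> F" "le y w" "w \<in> a" for w
  proof -
    have "le x w" using po_trans[OF po xF y(1) that(1) y(2) that(2)] .
    then show ?thesis using x that unfolding up_imp_def by auto
  qed
  then show "y \<in> up_imp F le a b" using y unfolding up_imp_def by auto
qed
lemma upset_upc: assumes po: "partial_order_on_set F le" and zF: "z \<in> F" shows "is_upset F le (upc F le z)"
  unfolding is_upset_def
proof (intro conjI ballI impI)
  show "upc F le z \<subseteq> F" unfolding upc_def by auto
  fix x y assume x: "x \<in> upc F le z" and y: "y \<in> F" "le x y"
  have "x \<in> F" "le z x" using x unfolding upc_def by auto
  then have "le z y" using po_trans[OF po zF _ y(1) _ y(2)] by auto
  then show "y \<in> upc F le z" using y unfolding upc_def by auto
qed
lemma upset_upc_minus: assumes po: "partial_order_on_set F le" and zF: "z \<in> F" shows "is_upset F le (upc F le z - {z})"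
  unfolding is_upset_def
proof (intro conjI ballI impI)
  show "upc F le z - {z} \<subseteq> F" unfolding upc_def by auto
  fix x y assume x: "x \<in> upc F le z - {z}" and y: "y \<in> F" "le x y"
  have xF: "x \<in> F" and zx: "le z x" and xz: "x \<noteq> z" using x unfolding upc_def by auto
  then have "le z y" using po_trans[OF po zF xF y(1) _ y(2)] by auto
  moreover have "y \<noteq> z"
  proof
    assume "y = z"
    then have "le x z" using y by simp
    then show False using po_antisym[OF po xF zF _ zx] xz by simp
  qed
  ultimately show "y \<in> upc F le z - {z}" using y unfolding upc_def by auto
qed
lemma up_imp_FF: "up_imp F le F F = F" by (auto simp: up_imp_def)

lemma root_minus_upset: assumes po: "partial_order_on_set F le" and r: "is_root F le r"
  shows "is_upset F le (F - {r})"
  unfolding is_upset_def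
proof (intro conjI ballI impI)
  show "F - {r} \<subseteq> F" by auto
  fix x y assume x: "x \<in> F - {r}" and y: "y \<in> F" "le x y"
  have rF: "r \<in> F" and rx: "le r x" using r x unfolding is_root_def by auto
  have "y \<noteq> r"
  proof
    assume "y = r"
    then have "le x r" using y by simp
    then show False using po_antisym[OF po _ rF _ rx] x by simp
  qed
  then show "y \<in> F - {r}" using y by auto
qed

lemma prime_filter_point:
  assumes po: "partial_order_on_set F le" and fin: "finite F"
    and n0: "\<not> \<Phi> {}" and nF: "\<Phi> F"
    and cI: "\<And>a b. is_upset F le a \<Longrightarrow> is_upset F le b \<Longrightarrow> \<Phi> (a \<inter> b) \<longleftrightarrow> \<Phi> a \<and> \<Phi> b"
    and cU: "\<And>a b. is_upset F le a \<Longrightarrow> is_upset F le b \<Longrightarrow> \<Phi> (a \<union> b) \<longleftrightarrow> \<Phi> a \<or> \<Phi> b"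
  shows "\<exists>z\<in>F. \<forall>a. is_upset F le a \<longrightarrow> (\<Phi> a \<longleftrightarrow> z \<in> a)"
proof -
  let ?S = "{a. is_upset F le a \<and> \<Phi> a}"
  have "F \<in> ?S" using nF upset_F by blast
  from ex_has_least_nat[of "\<lambda>a. a \<in> ?S" F card, OF this]
  obtain m where m: "m \<in> ?S" and mm: "\<And>a. a \<in> ?S \<Longrightarrow> card m \<le> card a" by blast
  have mF: "m \<subseteq> F" using m unfolding is_upset_def by auto
  have mmin: "m \<subseteq> a" if "a \<in> ?S" for a
  proof -
    have ua: "is_upset F le a" "\<Phi> a" using that by auto
    have um': "is_upset F le m" "\<Phi> m" using m by auto
    have "\<Phi> (a \<inter> m)" using cI[OF ua(1) um'(1)] ua(2) um'(2) by simp
    then have "a \<inter> m \<in> ?S" using upset_Int[OF ua(1) um'(1)] by simp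
    then have "card m \<le> card (a \<inter> m)" using mm by blast
    moreover have "finite m" using mF fin finite_subset by blast
    ultimately have "a \<inter> m = m" by (meson card_seteq inf_le2)
    then show ?thesis by blast
  qed
  have mne: "m \<noteq> {}" using m n0 by auto
  obtain z0 where "z0 \<in> m" using mne by blast
  from ex_has_least_nat[of "\<lambda>w. w \<in> m" z0 "\<lambda>w. card F - card (upc F le w)", OF this]
  obtain z where z: "z \<in> m" and zm: "\<And>w. w \<in> m \<Longrightarrow> card F - card (upc F le z) \<le> card F - card (upc F le w)" by blast
  have zF: "z \<in> F" using z mF by auto
  have zmin: "w = z" if "w \<in> m" "le w z" for w
  proof (rule ccontr)
    assume ne: "w \<noteq> z"
    have wF: "w \<in> F" using that mF by auto
    have "upc F le z \<subset> upc F le w"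
    proof
      show "upc F le z \<subseteq> upc F le w" using po_trans[OF po] that wF zF unfolding upc_def by blast
      show "upc F le z \<noteq> upc F le w"
      proof
        assume "upc F le z = upc F le w"
        moreover have "w \<in> upc F le w" using po_refl[OF po] wF unfolding upc_def by blast
        ultimately have "le z w" unfolding upc_def by auto
        then show False using po_antisym[OF po] that wF zF ne by blast
      qed
    qed
    moreover have "finite (upc F le w)" using fin unfolding upc_def by auto
    ultimately have "card (upc F le z) < card (upc F le w)" by (simp add: psubset_card_mono)
    moreover have "card (upc F le w) \<le> card F" using fin by (intro card_mono) (auto simp: upc_def)
    ultimately have "card F - card (upc F le w) < card F - card (upc F le z)" by linarith
    then show False using zm[OF that(1)] by linarith
  qed
  have mup: "\<And>x y. x \<in> m \<Longrightarrow> y \<in> F \<Longrightarrow> le x y \<Longrightarrow> y \<in> m" using m unfolding is_upset_def by blast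
  have um: "upc F le z \<subseteq> m" using mup z unfolding upc_def by blast
  have mz: "is_upset F le (m - {z})" unfolding is_upset_def using mF mup zmin by blast
  have "z \<in> upc F le z" using po_refl[OF po] zF unfolding upc_def by blast
  then have meq: "upc F le z \<union> (m - {z}) = m" using um z by blast
  have "\<Phi> (upc F le z \<union> (m - {z}))" unfolding meq using m by simp
  then have "\<Phi> (upc F le z) \<or> \<Phi> (m - {z})" using cU[OF upset_upc[OF po zF] mz] by simp
  moreover have "\<not> \<Phi> (m - {z})" using mmin[of "m - {z}"] mz z by blast
  ultimately have pz: "\<Phi> (upc F le z)" by blast
  show ?thesis
  proof (intro bexI[OF _ zF] allI impI iffI)
    fix a assume "is_upset F le a" "\<Phi> a"
    then show "z \<in> a" using mmin z by blast
  next
    fix a assume a: "is_upset F le a" "z \<in> a"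
    have aup: "\<And>x y. x \<in> a \<Longrightarrow> y \<in> F \<Longrightarrow> le x y \<Longrightarrow> y \<in> a" using a(1) unfolding is_upset_def by blast
    have "upc F le z \<inter> a = upc F le z" using aup a(2) unfolding upc_def by blast
    then show "\<Phi> a" using cI[OF upset_upc[OF po zF] a(1)] pz by auto
  qed
qed

lemma jankov_unfold:
  assumes fr: "finite_rooted_poset F le" and r: "is_root F le r"
  obtains pairs where "set pairs = Upsets F le \<times> Upsets F le"
    "jankov_fine F le = Imp (Conj (Iff (Var {}) Bot) (Conjs (map (\<lambda>(a, b). jankov_clause F le a b) pairs))) (Var (F - {r}))"
proof -
  have po: "partial_order_on_set F le" and fin: "finite F" using fr finite_rooted_poset_def by auto
  have "Upsets F le \<subseteq> Pow F" unfolding Upsets_def is_upset_def by auto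
  then have "finite (Upsets F le)" by (rule finite_subset) (use fin in simp)
  then have "finite (Upsets F le \<times> Upsets F le)" by (metis finite_cartesian_product)
  then have ex: "\<exists>xs. distinct xs \<and> set xs = Upsets F le \<times> Upsets F le"
    using finite_distinct_list by blast
  have th: "(THE r. is_root F le r) = r"
  proof (rule the_equality)
    show "is_root F le r" by fact
    fix r' assume "is_root F le r'"
    then show "r' = r" using r po_antisym[OF po] unfolding is_root_def by blast
  qed
  define pairs where "pairs = (SOME xs. distinct xs \<and> set xs = Upsets F le \<times> Upsets F le)"
  have "set pairs = Upsets F le \<times> Upsets F le" using someI_ex[OF ex] unfolding pairs_def by blast
  moreover have "jankov_fine F le = Imp (Conj (Iff (Var {}) Bot) (Conjs (map (\<lambda>(a, b). jankov_clause F le a b) pairs))) (Var (F - {r}))"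
    unfolding jankov_fine_def Let_def th pairs_def by simp
  ultimately show ?thesis using that by blast
qed

lemma dirA:
  fixes P :: "'a::euclidean_space set" and F :: "'b set" and f :: "'a \<Rightarrow> 'b"
  assumes fr: "finite_rooted_poset F le" and Q: "Q \<in> SubO P"
    and pm: "polyhedral_map P Q F le f" and om: "open_map P Q F le f" and surj: "f ` Q = F"
  shows "\<not> valid_on P (jankov_fine F le)"
proof
  assume val: "valid_on P (jankov_fine F le)"
  have po: "partial_order_on_set F le" using fr unfolding finite_rooted_poset_def by blast
  obtain r where r: "is_root F le r" using fr unfolding finite_rooted_poset_def by blast
  obtain pairs where pairs: "set pairs = Upsets F le \<times> Upsets F le"
    and jf: "jankov_fine F le = Imp (Conj (Iff (Var {}) Bot) (Conjs (map (\<lambda>(a, b). jankov_clause F le a b) pairs))) (Var (F - {r}))"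
    using jankov_unfold[OF fr r] by blast
  define D where "D = Conj (Iff (Var {}) Bot) (Conjs (map (\<lambda>(a, b). jankov_clause F le a b) pairs))"
  define v where "v a = (if is_upset F le a then {x\<in>Q. f x \<in> a} else Q)" for a
  have QP: "Q \<subseteq> P" using Q by (rule SubO_sub)
  have fF: "f x \<in> F" if "x \<in> Q" for x using surj that by blast
  have vup: "v a = {x\<in>Q. f x \<in> a}" if "is_upset F le a" for a using that unfolding v_def by simp
  have vS: "\<forall>a. v a \<in> SubO P"
  proof
    fix a show "v a \<in> SubO P"
    proof (cases "is_upset F le a")
      case True
      then have "{x\<in>Q. f x \<in> a} \<in> SubO_rel P Q" using pm unfolding polyhedral_map_def by blast
      then obtain W where W: "W \<in> SubO P" "{x\<in>Q. f x \<in> a} = W \<inter> Q" unfolding SubO_rel_def by blast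
      have "W \<inter> Q \<in> SubO P" using W(1) Q by (rule SubO_Int)
      then show ?thesis using vup[OF True] W(2) by simp
    next
      case False then show ?thesis using Q unfolding v_def by simp
    qed
  qed
  have opn: "is_upset F le (f ` W)" if "W \<in> SubO_rel P Q" for W
    using om that unfolding open_map_def by blast
  have clause: "Q \<subseteq> eval P v (jankov_clause F le a b)" if ab: "is_upset F le a" "is_upset F le b" for a b
  proof -
    let ?c = "up_imp F le a b"
    have uc: "is_upset F le ?c" using upset_imp[OF po] .
    have "v (a \<inter> b) = v a \<inter> v b" unfolding vup[OF upset_Int[OF ab]] vup[OF ab(1)] vup[OF ab(2)] by blast
    then have e1: "eval P v (Iff (Var (a \<inter> b)) (Conj (Var a) (Var b))) = P" by (intro eval_Iff_top) simp
    have "v (a \<union> b) = v a \<union> v b" unfolding vup[OF upset_Un[OF ab]] vup[OF ab(1)] vup[OF ab(2)] by blast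
    then have e2: "eval P v (Iff (Var (a \<union> b)) (Disj (Var a) (Var b))) = P" by (intro eval_Iff_top) simp
    have e3a: "eval P v (Imp (Var ?c) (Imp (Var a) (Var b))) = P"
    proof (rule eval_Imp_top)
      show "eval P v (Var ?c) \<subseteq> eval P v (Imp (Var a) (Var b))"
      proof
        fix x assume x: "x \<in> eval P v (Var ?c)"
        have "v ?c \<inter> eval P v (Var a) \<subseteq> eval P v (Var b)"
        proof
          fix x' assume x': "x' \<in> v ?c \<inter> eval P v (Var a)"
          then have x'Q: "x' \<in> Q" and fc: "f x' \<in> ?c" and fa: "f x' \<in> a"
            using vup[OF uc] vup[OF ab(1)] by auto
          have "le (f x') (f x')" using po_refl[OF po fF[OF x'Q]] .
          then have "f x' \<in> b" using fc fa fF[OF x'Q] unfolding up_imp_def by blast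
          then show "x' \<in> eval P v (Var b)" using x'Q vup[OF ab(2)] by simp
        qed
        moreover have "v ?c \<in> SubO P" using vS by blast
        ultimately show "x \<in> eval P v (Imp (Var a) (Var b))" using x by (intro eval_Imp_I[of "v ?c"]) simp_all
      qed
    qed
    have e3b: "Q \<subseteq> eval P v (Imp (Imp (Var a) (Var b)) (Var ?c))"
    proof
      fix x assume x: "x \<in> Q"
      have "Q \<inter> eval P v (Imp (Var a) (Var b)) \<subseteq> eval P v (Var ?c)"
      proof
        fix x' assume x': "x' \<in> Q \<inter> eval P v (Imp (Var a) (Var b))"
        then have x'Q: "x' \<in> Q" by blast
        from x' obtain c' where c': "c' \<in> SubO P" "x' \<in> c'" "c' \<inter> v a \<subseteq> v b"
          unfolding eval.simps by blast
        have Wr: "c' \<inter> Q \<in> SubO_rel P Q" unfolding SubO_rel_def using c'(1) by blast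
        have up: "is_upset F le (f ` (c' \<inter> Q))" by (rule opn[OF Wr])
        have "f x' \<in> ?c"
          unfolding up_imp_def
        proof (intro CollectI conjI ballI impI)
          show "f x' \<in> F" using fF[OF x'Q] .
          fix yy assume yy: "yy \<in> F" "le (f x') yy \<and> yy \<in> a"
          have "f x' \<in> f ` (c' \<inter> Q)" using x'Q c'(2) by blast
          then have "yy \<in> f ` (c' \<inter> Q)" using up yy unfolding is_upset_def by blast
          then obtain x'' where x'': "x'' \<in> c'" "x'' \<in> Q" "yy = f x''" by blast
          then have "x'' \<in> v a" using yy vup[OF ab(1)] by simp
          then have "x'' \<in> v b" using c'(3) x'' by blast
          then show "yy \<in> b" using x'' vup[OF ab(2)] by simp
        qed
        then show "x' \<in> eval P v (Var ?c)" using x'Q vup[OF uc] by simp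
      qed
      then show "x \<in> eval P v (Imp (Imp (Var a) (Var b)) (Var ?c))"
        using x Q by (intro eval_Imp_I[of Q]) simp_all
    qed
    have e3: "Q \<subseteq> eval P v (Iff (Var ?c) (Imp (Var a) (Var b)))"
      unfolding Iff_def eval.simps(3) using e3a e3b QP by blast
    show ?thesis unfolding jankov_clause_def eval.simps(3) using e1 e2 e3 QP by blast
  qed
  have "v {} = {}" using vup[OF upset_empty] by simp
  then have e0: "eval P v (Iff (Var {}) Bot) = P" by (intro eval_Iff_top) simp
  have "Q \<subseteq> eval P v \<phi>" if "\<phi> \<in> set (map (\<lambda>(a,b). jankov_clause F le a b) pairs)" for \<phi>
  proof -
    from that obtain a b where ab: "(a,b) \<in> set pairs" "\<phi> = jankov_clause F le a b" by auto
    then have "is_upset F le a" "is_upset F le b" using pairs unfolding Upsets_def by auto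
    then show ?thesis using clause ab(2) by simp
  qed
  then have QC: "Q \<subseteq> eval P v (Conjs (map (\<lambda>(a,b). jankov_clause F le a b) pairs))"
    unfolding eval_Conjs using QP by blast
  have QD: "Q \<subseteq> eval P v D" unfolding D_def eval.simps(3) using e0 QC QP by blast
  have rF: "r \<in> F" using r unfolding is_root_def by blast
  then obtain q where q: "q \<in> Q" "f q = r" using surj by blast
  have ev: "eval P v (jankov_fine F le) = P" using val vS unfolding valid_on_def by blast
  have "eval P v (Imp D (Var (F - {r}))) = P" using ev by (simp only: jf D_def)
  then have "q \<in> eval P v (Imp D (Var (F - {r})))" using q(1) QP by blast
  then have "q \<in> eval P v (Var (F - {r}))" using eval_Imp_mp QD q(1) by blast
  then have "q \<in> v (F - {r})" by simp
  then have "f q \<in> F - {r}" using vup[OF root_minus_upset[OF po r]] by simp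
  then show False using q(2) by simp
qed

lemma dirB:
  fixes P :: "'a::euclidean_space set" and F :: "'b set"
  assumes P: "polyhedron P" and fr: "finite_rooted_poset F le" and nv: "\<not> valid_on P (jankov_fine F le)"
  shows "\<exists>Q (f :: 'a \<Rightarrow> 'b). Q \<in> SubO P \<and> (convex P \<longrightarrow> convex Q) \<and> polyhedral_map P Q F le f \<and>
            open_map P Q F le f \<and> f ` Q = F"
proof -
  have po: "partial_order_on_set F le" and fin: "finite F" using fr unfolding finite_rooted_poset_def by blast+
  obtain r where r: "is_root F le r" using fr unfolding finite_rooted_poset_def by blast
  obtain pairs where pairs: "set pairs = Upsets F le \<times> Upsets F le"
    and jf: "jankov_fine F le = Imp (Conj (Iff (Var {}) Bot) (Conjs (map (\<lambda>(a, b). jankov_clause F le a b) pairs))) (Var (F - {r}))"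
    using jankov_unfold[OF fr r] by blast
  define D where "D = Conj (Iff (Var {}) Bot) (Conjs (map (\<lambda>(a, b). jankov_clause F le a b) pairs))"
  from nv obtain v where vS: "\<forall>x. v x \<in> SubO P" and ne: "eval P v (jankov_fine F le) \<noteq> P"
    unfolding valid_on_def by blast
  let ?s = "F - {r}"
  have "\<not> eval P v D \<subseteq> v ?s"
  proof
    assume "eval P v D \<subseteq> v ?s"
    then have "eval P v (Imp D (Var ?s)) = P" by (intro eval_Imp_top) simp
    then show False using ne jf D_def by simp
  qed
  then obtain y where yD: "y \<in> eval P v D" and ys: "y \<notin> v ?s" by blast
  obtain c where c: "c \<in> SubO P" "y \<in> c" "c \<subseteq> eval P v D" using eval_locopen[OF vS yD] by blast
  obtain Q where Q: "Q \<in> SubO P" "y \<in> Q" "Q \<subseteq> c" "convex P \<longrightarrow> convex Q" using nbhd[OF P c(1,2)] by blast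
  have QD: "Q \<subseteq> eval P v D" using Q c by blast
  have QP: "Q \<subseteq> P" using Q(1) SubO_sub by blast
  have Dfacts: "x \<notin> v {} \<and> x \<in> P \<and> (\<forall>a b. is_upset F le a \<longrightarrow> is_upset F le b \<longrightarrow>
       (x \<in> v (a \<inter> b) \<longleftrightarrow> x \<in> v a \<and> x \<in> v b) \<and> (x \<in> v (a \<union> b) \<longleftrightarrow> x \<in> v a \<or> x \<in> v b) \<and>
       (x \<in> v (up_imp F le a b) \<longleftrightarrow> x \<in> eval P v (Imp (Var a) (Var b))))"
    if x: "x \<in> eval P v D" for x
  proof -
    have x1: "x \<in> eval P v (Iff (Var {}) Bot)" and x2: "x \<in> eval P v (Conjs (map (\<lambda>(a, b). jankov_clause F le a b) pairs))"
      using x unfolding D_def by simp_all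
    have "x \<notin> v {}" using eval_Iff_mem[OF x1] by simp
    moreover have "x \<in> P" using x1 eval_Iff_sub by blast
    moreover have "(x \<in> v (a \<inter> b) \<longleftrightarrow> x \<in> v a \<and> x \<in> v b) \<and> (x \<in> v (a \<union> b) \<longleftrightarrow> x \<in> v a \<or> x \<in> v b) \<and>
       (x \<in> v (up_imp F le a b) \<longleftrightarrow> x \<in> eval P v (Imp (Var a) (Var b)))"
      if ab: "is_upset F le a" "is_upset F le b" for a b
    proof -
      have "(a,b) \<in> set pairs" using pairs ab unfolding Upsets_def by simp
      then have "jankov_clause F le a b \<in> set (map (\<lambda>(a, b). jankov_clause F le a b) pairs)" by force
      then have "x \<in> eval P v (jankov_clause F le a b)" using x2 unfolding eval_Conjs by blast
      then have cl: "x \<in> eval P v (Iff (Var (a \<inter> b)) (Conj (Var a) (Var b)))"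
        "x \<in> eval P v (Iff (Var (a \<union> b)) (Disj (Var a) (Var b)))"
        "x \<in> eval P v (Iff (Var (up_imp F le a b)) (Imp (Var a) (Var b)))"
        unfolding jankov_clause_def eval.simps(3) by blast+
      show ?thesis using eval_Iff_mem[OF cl(1)] eval_Iff_mem[OF cl(2)] eval_Iff_mem[OF cl(3)] by simp
    qed
    ultimately show ?thesis by blast
  qed
  have pt: "\<exists>z\<in>F. \<forall>a. is_upset F le a \<longrightarrow> (x \<in> v a \<longleftrightarrow> z \<in> a)" if x: "x \<in> eval P v D" for x
  proof (rule prime_filter_point[OF po fin])
    show "x \<notin> v {}" using Dfacts[OF x] by blast
    have xP: "x \<in> P" using Dfacts[OF x] by blast
    have "x \<in> v (up_imp F le F F) \<longleftrightarrow> x \<in> eval P v (Imp (Var F) (Var F))"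
      using Dfacts[OF x] upset_F by blast
    moreover have "eval P v (Imp (Var F) (Var F)) = P" by (rule eval_Imp_top) simp
    ultimately have "x \<in> v (up_imp F le F F)" using xP by blast
    then show "x \<in> v F" by (simp only: up_imp_FF)
    fix a b assume "is_upset F le a" "is_upset F le b"
    then show "x \<in> v (a \<inter> b) \<longleftrightarrow> x \<in> v a \<and> x \<in> v b" "x \<in> v (a \<union> b) \<longleftrightarrow> x \<in> v a \<or> x \<in> v b"
      using Dfacts[OF x] by blast+
  qed
  define f where "f x = (SOME z. z \<in> F \<and> (\<forall>a. is_upset F le a \<longrightarrow> (x \<in> v a \<longleftrightarrow> z \<in> a)))" for x
  have fz: "f x \<in> F \<and> (\<forall>a. is_upset F le a \<longrightarrow> (x \<in> v a \<longleftrightarrow> f x \<in> a))" if x: "x \<in> eval P v D" for x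
  proof -
    have "\<exists>z. z \<in> F \<and> (\<forall>a. is_upset F le a \<longrightarrow> (x \<in> v a \<longleftrightarrow> z \<in> a))" using pt[OF x] by blast
    then show ?thesis unfolding f_def by (rule someI_ex)
  qed
  have fF: "f x \<in> F" if "x \<in> Q" for x using fz QD that by blast
  have fv: "x \<in> v a \<longleftrightarrow> f x \<in> a" if "x \<in> Q" "is_upset F le a" for x a
    using fz QD that by blast
  have pm: "polyhedral_map P Q F le f"
    unfolding polyhedral_map_def
  proof (intro conjI allI impI)
    show "f ` Q \<subseteq> F" using fF by blast
    fix U assume U: "is_upset F le U"
    have "{x\<in>Q. f x \<in> U} = v U \<inter> Q" using fv U by blast
    moreover have "v U \<in> SubO P" using vS by blast
    ultimately show "{x\<in>Q. f x \<in> U} \<in> SubO_rel P Q" unfolding SubO_rel_def by blast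
  qed
  have opn: "is_upset F le (f ` W)" if W: "W \<in> SubO_rel P Q" for W
  proof -
    obtain W0 where W0: "W0 \<in> SubO P" "W = W0 \<inter> Q" using W unfolding SubO_rel_def by blast
    show ?thesis
      unfolding is_upset_def
    proof (intro conjI ballI impI)
      show "f ` W \<subseteq> F" using fF W0(2) by blast
      fix fy z' assume fy: "fy \<in> f ` W" and z': "z' \<in> F" "le fy z'"
      then obtain y where y: "y \<in> W" "fy = f y" by blast
      show "z' \<in> f ` W"
      proof (rule ccontr)
        assume nz: "z' \<notin> f ` W"
        let ?a = "upc F le z'" and ?b = "upc F le z' - {z'}"
        have ua: "is_upset F le ?a" using upset_upc[OF po z'(1)] .
        have ub: "is_upset F le ?b" using upset_upc_minus[OF po z'(1)] .
        have yQ: "y \<in> Q" using y W0 by blast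
        have yD: "y \<in> eval P v D" using QD yQ by blast
        have "le z' z'" using po_refl[OF po z'(1)] .
        then have "f y \<notin> up_imp F le ?a ?b" unfolding up_imp_def upc_def using z' y(2) by blast
        moreover have "y \<in> v (up_imp F le ?a ?b) \<longleftrightarrow> f y \<in> up_imp F le ?a ?b"
          using fv[OF yQ upset_imp[OF po]] .
        ultimately have "y \<notin> v (up_imp F le ?a ?b)" by blast
        then have nimp: "y \<notin> eval P v (Imp (Var ?a) (Var ?b))" using Dfacts[OF yD] ua ub by blast
        have "y \<in> eval P v (Imp (Var ?a) (Var ?b))"
        proof (rule eval_Imp_I[of "W0 \<inter> Q"])
          show "W0 \<inter> Q \<in> SubO P" using W0(1) Q(1) by (rule SubO_Int)
          show "y \<in> W0 \<inter> Q" using y W0 by simp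
          show "(W0 \<inter> Q) \<inter> eval P v (Var ?a) \<subseteq> eval P v (Var ?b)"
          proof
            fix x' assume x': "x' \<in> (W0 \<inter> Q) \<inter> eval P v (Var ?a)"
            then have x'Q: "x' \<in> Q" and x'a: "x' \<in> v ?a" by auto
            have "f x' \<in> ?a" using fv[OF x'Q ua] x'a by blast
            moreover have "f x' \<noteq> z'" using x' nz W0(2) by blast
            ultimately have "f x' \<in> ?b" by blast
            then show "x' \<in> eval P v (Var ?b)" using fv[OF x'Q ub] by simp
          qed
        qed
        then show False using nimp by blast
      qed
    qed
  qed
  have om: "open_map P Q F le f" unfolding open_map_def using opn by blast
  have "y \<in> v ?s \<longleftrightarrow> f y \<in> ?s" using fv[OF Q(2) root_minus_upset[OF po r]] .
  then have fyr: "f y = r" using ys fF[OF Q(2)] by blast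
  have "Q \<in> SubO_rel P Q" unfolding SubO_rel_def using SubO_top[of P] QP by blast
  then have uQ: "is_upset F le (f ` Q)" by (rule opn)
  have "F \<subseteq> f ` Q"
  proof
    fix z assume z: "z \<in> F"
    have "le r z" using r z unfolding is_root_def by blast
    moreover have "r \<in> f ` Q" using fyr Q(2) by blast
    ultimately show "z \<in> f ` Q" using uQ z unfolding is_upset_def by blast
  qed
  then have "f ` Q = F" using fF by blast
  then show ?thesis using Q(1,4) pm om by blast
qed

theorem lemma4p7:
  fixes P :: "'a::euclidean_space set"
    and F :: "'b set" and le :: "'b \<Rightarrow> 'b \<Rightarrow> bool"
  assumes "polyhedron P"
    and "finite_rooted_poset F le"
  shows "(\<not> valid_on P (jankov_fine F le) \<longleftrightarrow>
            (\<exists>Q (f :: 'a \<Rightarrow> 'b). Q \<in> SubO P \<and> polyhedral_map P Q F le f \<and>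
                 open_map P Q F le f \<and> f ` Q = F))
       \<and> (convex P \<longrightarrow> \<not> valid_on P (jankov_fine F le) \<longrightarrow>
            (\<exists>Q (f :: 'a \<Rightarrow> 'b). Q \<in> SubO P \<and> convex Q \<and> polyhedral_map P Q F le f \<and>
                 open_map P Q F le f \<and> f ` Q = F))"
proof (intro conjI iffI impI)
  assume "\<not> valid_on P (jankov_fine F le)"
  then show "\<exists>Q (f :: 'a \<Rightarrow> 'b). Q \<in> SubO P \<and> polyhedral_map P Q F le f \<and> open_map P Q F le f \<and> f ` Q = F"
    using dirB[OF assms] by blast
next
  assume "\<exists>Q (f :: 'a \<Rightarrow> 'b). Q \<in> SubO P \<and> polyhedral_map P Q F le f \<and> open_map P Q F le f \<and> f ` Q = F"
  then obtain Q and f :: "'a \<Rightarrow> 'b" where "Q \<in> SubO P" "polyhedral_map P Q F le f" "open_map P Q F le f" "f ` Q = F"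
    by blast
  then show "\<not> valid_on P (jankov_fine F le)" using dirA[OF assms(2)] by blast
next
  assume "convex P" "\<not> valid_on P (jankov_fine F le)"
  then show "\<exists>Q (f :: 'a \<Rightarrow> 'b). Q \<in> SubO P \<and> convex Q \<and> polyhedral_map P Q F le f \<and> open_map P Q F le f \<and> f ` Q = F"
    using dirB[OF assms] by blast
qed

end
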